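(* Let $q(m,n)=am^2+bmn+cn^2$ with $a,b,c\in\mathbb{Z}$ be a binary quadratic form whose discriminant $\Delta(q)=b^2-4ac$ is a perfect square (including $0$, and including the zero form). Then for every $0<\lambda\le 1$ there exists a nonnegative $f\in\ell^1(\mathbb{Z})$ with $\|\mathcal{I}_\lambda f\|_{\ell^1(\mathbb{Z})}=\infty$, where $\mathcal{I}_{\lambda}f(n)=\sum_{m\in\mathbb{Z}\setminus\{0\}}\frac{f(q(m,n))}{|m|^{\lambda}}$.
   Context: Sums of nonnegative terms are allowed to equal $+\infty$. *)

theory Defs
  imports "HOL-Analysis.Analysis"
begin

definition qform :: "int \<Rightarrow> int \<Rightarrow> int \<Rightarrow> int \<Rightarrow> int \<Rightarrow> int" where
  "qform a b c m n = a * m^2 + b * m * n + c * n^2"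

definition Iop :: "int \<Rightarrow> int \<Rightarrow> int \<Rightarrow> real \<Rightarrow> (int \<Rightarrow> real) \<Rightarrow> int \<Rightarrow> ennreal" where
  "Iop a b c lam f n = (\<Sum>\<^sub>\<infinity>m\<in>UNIV - {0}. ennreal (f (qform a b c m n) / \<bar>real_of_int m\<bar> powr lam))"

end

theory Submission
  imports Defs
begin

lemma ens_summ[simp]: "(f::_ \<Rightarrow> ennreal) summable_on S"
  by (rule nonneg_summable_on_complete) simp

lemma ennreal_le_infsum:
  fixes g :: "'a \<Rightarrow> ennreal"
  assumes "x \<in> S"
  shows "g x \<le> infsum g S"
proof -
  have "infsum g {x} \<le> infsum g S"
    by (rule infsum_mono_neutral) (use assms in auto)
  thus ?thesis by simp
qed

lemma harm_nat:
  fixes D :: real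
  assumes D: "D > 0"
  shows "(\<Sum>\<^sub>\<infinity>n\<in>(UNIV::nat set). ennreal (1 / (D * real (Suc n)))) = \<infinity>"
proof (rule ccontr)
  define g where "g n = 1 / (D * real (Suc n))" for n
  assume ne: "(\<Sum>\<^sub>\<infinity>n\<in>(UNIV::nat set). ennreal (1 / (D * real (Suc n)))) \<noteq> \<infinity>"
  then obtain r where r: "(\<Sum>\<^sub>\<infinity>n\<in>(UNIV::nat set). ennreal (g n)) = ennreal r" "r \<ge> 0"
    unfolding g_def by (metis ennreal_cases infinity_ennreal_def)
  have gpos: "\<And>n. 0 \<le> g n" using D by (simp add: g_def)
  have "\<And>N. (\<Sum>i<N. g i) \<le> r"
  proof -
    fix N
    have "ennreal (\<Sum>i<N. g i) = (\<Sum>i<N. ennreal (g i))"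
      using gpos by (simp add: sum_ennreal)
    also have "\<dots> = infsum (\<lambda>i. ennreal (g i)) {..<N}" by simp
    also have "\<dots> \<le> infsum (\<lambda>i. ennreal (g i)) UNIV"
      by (rule infsum_mono_neutral) auto
    finally show "(\<Sum>i<N. g i) \<le> r" using r by (simp add: ennreal_le_iff)
  qed
  hence "summable g" using gpos by (intro summableI_nonneg_bounded) auto
  hence "summable (\<lambda>n. D * g n)" by (rule summable_mult)
  moreover have "(\<lambda>n. D * g n) = (\<lambda>n. inverse (real (Suc n)))"
  proof
    fix n
    have "D + D * real n > 0" using D by (simp add: add_pos_nonneg)
    thus "D * g n = inverse (real (Suc n))" using D by (simp add: g_def field_simps)
  qed
  ultimately have "summable (\<lambda>n. inverse (real (Suc n)))" by simp
  hence "summable (\<lambda>n. inverse (real n))"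
    using summable_Suc_iff[of "\<lambda>n. inverse (real n)"] by simp
  thus False using not_summable_harmonic by blast
qed

lemma harm_int:
  fixes C :: int and lam :: real
  assumes C: "C \<noteq> 0" and lam: "0 < lam" "lam \<le> 1"
  shows "(\<Sum>\<^sub>\<infinity>t\<in>UNIV - {0::int}. ennreal (1 / \<bar>real_of_int (t * C)\<bar> powr lam)) = \<infinity>"
proof -
  define h where "h n = int (Suc n)" for n
  define G where "G t = ennreal (1 / \<bar>real_of_int (t * C)\<bar> powr lam)" for t
  have "\<infinity> = (\<Sum>\<^sub>\<infinity>n\<in>(UNIV::nat set). ennreal (1 / (real_of_int \<bar>C\<bar> * real (Suc n))))"
    using harm_nat[of "real_of_int \<bar>C\<bar>"] C by simp
  also have "\<dots> \<le> (\<Sum>\<^sub>\<infinity>n\<in>(UNIV::nat set). (G \<circ> h) n)"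
  proof (rule infsum_mono)
    fix n :: nat
    define x where "x = real_of_int \<bar>C\<bar> * real (Suc n)"
    have c1: "real_of_int \<bar>C\<bar> \<ge> 1" using C by linarith
    have "real (Suc n) \<ge> 1" by simp
    hence x1: "x \<ge> 1" unfolding x_def using c1 by (metis mult_mono' mult_1 zero_le_one)
    have "\<bar>real_of_int (h n * C)\<bar> = x" unfolding x_def h_def by (simp add: abs_mult)
    moreover have "x powr lam \<le> x powr 1" using x1 lam by (intro powr_mono) auto
    moreover have "x powr lam > 0" using x1 by simp
    ultimately have "1 / x \<le> 1 / \<bar>real_of_int (h n * C)\<bar> powr lam"
      using x1 by (simp add: frac_le)
    thus "ennreal (1 / (real_of_int \<bar>C\<bar> * real (Suc n))) \<le> (G \<circ> h) n"
      unfolding G_def x_def[symmetric] by (simp add: ennreal_leI)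
  qed auto
  also have "\<dots> = infsum G (h ` UNIV)"
    by (rule infsum_reindex[symmetric]) (auto simp: inj_on_def h_def)
  also have "\<dots> \<le> infsum G (UNIV - {0})"
    by (rule infsum_mono_neutral) (auto simp: h_def)
  finally show ?thesis unfolding G_def by (simp add: top_unique)
qed

lemma delta_summable: "(\<lambda>x::int. if x = v then (1::real) else 0) summable_on UNIV"
proof -
  have "(\<lambda>x::int. if x = v then (1::real) else 0) summable_on {v}" by simp
  moreover have "(\<lambda>x::int. if x = v then (1::real) else 0) summable_on UNIV \<longleftrightarrow>
     (\<lambda>x::int. if x = v then (1::real) else 0) summable_on {v}"
    by (rule summable_on_cong_neutral) auto
  ultimately show ?thesis by simp
qed

theorem mainTheorem5:
  fixes a b c :: int and lam :: real
  assumes disc_square: "\<exists>k::int. b^2 - 4*a*c = k^2"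
    and lam: "0 < lam" "lam \<le> 1"
  shows "\<exists>f :: int \<Rightarrow> real. (\<forall>n. 0 \<le> f n) \<and> f summable_on UNIV \<and>
           (\<Sum>\<^sub>\<infinity>n\<in>UNIV. Iop a b c lam f n) = \<infinity>"
proof -
  obtain k0 where k0: "b^2 - 4*a*c = k0^2" using disc_square by blast
  consider (A) "a = 0" | (B) "a \<noteq> 0" "b = 0" "c = 0" | (C) "a \<noteq> 0" "\<not> (b = 0 \<and> c = 0)" by blast
  then show ?thesis
  proof cases
    case A
    define f where "f x = (if x = 0 then (1::real) else 0)" for x :: int
    have "\<infinity> = (\<Sum>\<^sub>\<infinity>t\<in>UNIV - {0::int}. ennreal (1 / \<bar>real_of_int (t * 1)\<bar> powr lam))"
      using harm_int[of 1 lam] lam by simp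
    also have "\<dots> = Iop a b c lam f 0"
      unfolding Iop_def f_def qform_def using A by simp
    also have "\<dots> \<le> (\<Sum>\<^sub>\<infinity>n\<in>UNIV. Iop a b c lam f n)" by (rule ennreal_le_infsum) simp
    finally have "(\<Sum>\<^sub>\<infinity>n\<in>UNIV. Iop a b c lam f n) = \<infinity>" by (simp add: top_unique)
    moreover have "f summable_on UNIV" unfolding f_def by (rule delta_summable)
    ultimately show ?thesis by (intro exI[of _ f]) (auto simp: f_def)
  next
    case B
    define f where "f x = (if x = a then (1::real) else 0)" for x :: int
    have "(\<Sum>\<^sub>\<infinity>n\<in>UNIV. Iop a b c lam f n) = \<infinity>"
    proof (rule infsum_superconst_infinite_ennreal[where b = 1])
      fix n :: int
      have "ennreal (f (qform a b c 1 n) / \<bar>real_of_int 1\<bar> powr lam) \<le> Iop a b c lam f n"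
        unfolding Iop_def by (rule ennreal_le_infsum) simp
      thus "1 \<le> Iop a b c lam f n" using B by (simp add: f_def qform_def)
    qed auto
    moreover have "f summable_on UNIV" unfolding f_def by (rule delta_summable)
    ultimately show ?thesis by (intro exI[of _ f]) (auto simp: f_def)
  next
    case C
    obtain k where k: "b^2 - 4*a*c = k^2" "k \<noteq> b"
    proof (cases "k0 = b")
      case True
      hence "b \<noteq> 0" using C k0 by auto
      moreover have "b^2 - 4*a*c = (-k0)^2" using k0 by simp
      ultimately show ?thesis using that[of "-k0"] True by simp
    next
      case False thus ?thesis using that k0 by blast
    qed
    define m0 where "m0 = k - b"
    define n0 where "n0 = 2 * a"
    have m0: "m0 \<noteq> 0" using k by (simp add: m0_def)
    have n0: "n0 \<noteq> 0" using C by (simp add: n0_def)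
    have q0: "qform a b c (t * m0) (t * n0) = 0" for t
    proof -
      have "qform a b c (t * m0) (t * n0) = t^2 * a * (k^2 - (b^2 - 4*a*c))"
        unfolding qform_def m0_def n0_def by (simp add: algebra_simps power2_eq_square)
      thus ?thesis using k by simp
    qed
    define f where "f x = (if x = 0 then (1::real) else 0)" for x :: int
    have "\<infinity> = (\<Sum>\<^sub>\<infinity>t\<in>UNIV - {0::int}. ennreal (1 / \<bar>real_of_int (t * m0)\<bar> powr lam))"
      using harm_int[OF m0 lam] by simp
    also have "\<dots> \<le> (\<Sum>\<^sub>\<infinity>t\<in>UNIV - {0::int}. (Iop a b c lam f \<circ> (\<lambda>t. t * n0)) t)"
    proof (rule infsum_mono)
      fix t :: int assume t: "t \<in> UNIV - {0}"
      have "ennreal (f (qform a b c (t * m0) (t * n0)) / \<bar>real_of_int (t * m0)\<bar> powr lam)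
            \<le> Iop a b c lam f (t * n0)"
        unfolding Iop_def by (rule ennreal_le_infsum) (use t m0 in simp)
      thus "ennreal (1 / \<bar>real_of_int (t * m0)\<bar> powr lam) \<le> (Iop a b c lam f \<circ> (\<lambda>t. t * n0)) t"
        using q0 by (simp add: f_def)
    qed auto
    also have "\<dots> = infsum (Iop a b c lam f) ((\<lambda>t. t * n0) ` (UNIV - {0}))"
      by (rule infsum_reindex[symmetric]) (use n0 in \<open>auto simp: inj_on_def\<close>)
    also have "\<dots> \<le> (\<Sum>\<^sub>\<infinity>n\<in>UNIV. Iop a b c lam f n)"
      by (rule infsum_mono_neutral) auto
    finally have "(\<Sum>\<^sub>\<infinity>n\<in>UNIV. Iop a b c lam f n) = \<infinity>" by (simp add: top_unique)
    moreover have "f summable_on UNIV" unfolding f_def by (rule delta_summable)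
    ultimately show ?thesis by (intro exI[of _ f]) (auto simp: f_def)
  qed
qed

end
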